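(* Under the setting of the context, if (TS1) holds and $u$ is the solution of problem (P), then $$\int_0^\infty u(x,t)\,\Delta t=\int_0^\infty u(0,t)\,\Delta t=\frac{A\mu_x}{k}\quad\text{for all }x\in\mu_x\mathbb{N}_0.$$
   Context: A time scale $\mathbb{T}$ is a nonempty closed subset of $\mathbb{R}$; here $\min\mathbb{T}=0$ and $\sup\mathbb{T}=+\infty$. $\sigma(t)=\inf\{s\in\mathbb{T}:s>t\}$ is the forward jump and $\mu_t(t)=\sigma(t)-t$ the graininess; $u^{\Delta_t}$ denotes the (Hilger) delta derivative in $t$ and $\int\cdot\,\Delta t$ the delta integral, with $\int_0^\infty=\lim_{T\to\infty}\int_0^T$. Fix $A>0$, $k>0$, $\mu_x>0$, $\Omega=\mu_x\mathbb{Z}\times\mathbb{T}$, $\mu_x\mathbb{N}_0=\{0,\mu_x,2\mu_x,\dots\}$. Problem (P): $u^{\Delta_t}(x,t)+k\frac{u(x,t)-u(x-\mu_x,t)}{\mu_x}=0$ for $(x,t)\in\Omega$, $u(0,0)=A$, $u(x,0)=0$ for $x\ne0$. A solution is $u:\Omega\to\mathbb{R}$ with each $u(x,\cdot)$ delta differentiable on $\mathbb{T}$, satisfying (P), and bounded on $\mu_x\mathbb{Z}\times(\mathbb{T}\cap[0,T_0])$ for every $T_0>0$. Condition (TS1): $1-\frac{k\mu_t(t)}{\mu_x}>0$ for all $t\in\mathbb{T}$. *)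

theory Defs
  imports "HOL-Analysis.Analysis"
begin

definition time_scale0 :: "real set \<Rightarrow> bool" where
  "time_scale0 TS \<longleftrightarrow> closed TS \<and> 0 \<in> TS \<and> (\<forall>t\<in>TS. 0 \<le> t) \<and> \<not> bdd_above TS"

definition sigma_ts :: "real set \<Rightarrow> real \<Rightarrow> real" where
  "sigma_ts TS t = Inf {s \<in> TS. s > t}"

definition graininess :: "real set \<Rightarrow> real \<Rightarrow> real" where
  "graininess TS t = sigma_ts TS t - t"

definition has_delta_derivative :: "real set \<Rightarrow> (real \<Rightarrow> real) \<Rightarrow> real \<Rightarrow> real \<Rightarrow> bool" where
  "has_delta_derivative TS f D t \<longleftrightarrow>
     (\<forall>\<epsilon>>0. \<exists>\<delta>>0. \<forall>s\<in>TS. \<bar>s - t\<bar> < \<delta> \<longrightarrow>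
        \<bar>(f (sigma_ts TS t) - f s) - D * (sigma_ts TS t - s)\<bar> \<le> \<epsilon> * \<bar>sigma_ts TS t - s\<bar>)"

definition delta_differentiable :: "real set \<Rightarrow> (real \<Rightarrow> real) \<Rightarrow> real \<Rightarrow> bool" where
  "delta_differentiable TS f t \<longleftrightarrow> (\<exists>D. has_delta_derivative TS f D t)"

text \<open>Antiderivative (for a time scale without maximum, T^kappa = T) and the
  delta (Cauchy) integral  int_a^b f Delta t = F b - F a  (Bohner--Peterson, Def. 1.71).\<close>
definition delta_antiderivative :: "real set \<Rightarrow> (real \<Rightarrow> real) \<Rightarrow> (real \<Rightarrow> real) \<Rightarrow> bool" where
  "delta_antiderivative TS f F \<longleftrightarrow> (\<forall>t\<in>TS. has_delta_derivative TS F (f t) t)"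

definition delta_integral :: "real set \<Rightarrow> (real \<Rightarrow> real) \<Rightarrow> real \<Rightarrow> real \<Rightarrow> real" where
  "delta_integral TS f a b = (SOME I. \<exists>F. delta_antiderivative TS f F \<and> I = F b - F a)"

definition delta_improper_integral_eq :: "real set \<Rightarrow> (real \<Rightarrow> real) \<Rightarrow> real \<Rightarrow> bool" where
  "delta_improper_integral_eq TS f L \<longleftrightarrow>
     ((\<lambda>b. delta_integral TS f 0 b) \<longlongrightarrow> L) (inf at_top (principal TS))"

definition solves_P :: "real set \<Rightarrow> real \<Rightarrow> real \<Rightarrow> real \<Rightarrow> (real \<Rightarrow> real \<Rightarrow> real) \<Rightarrow> bool" where
  "solves_P TS A k mux u \<longleftrightarrow>
     (\<forall>n::int. \<forall>t\<in>TS. has_delta_derivative TS (\<lambda>s. u (of_int n * mux) s)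
         (- k * (u (of_int n * mux) t - u (of_int n * mux - mux) t) / mux) t)
   \<and> u 0 0 = A
   \<and> (\<forall>n::int. n \<noteq> 0 \<longrightarrow> u (of_int n * mux) 0 = 0)
   \<and> (\<forall>T0>0. \<exists>B. \<forall>n::int. \<forall>t\<in>TS. t \<le> T0 \<longrightarrow> \<bar>u (of_int n * mux) t\<bar> \<le> B)"

end

theory Submission
  imports Defs
begin

lemma ts_props:
  assumes "time_scale0 TS"
  shows "closed TS" "0 \<in> TS" "\<And>t. t \<in> TS \<Longrightarrow> 0 \<le> t" "\<not> bdd_above TS"
  using assms unfolding time_scale0_def by auto

lemma ts_above:
  assumes "time_scale0 TS" shows "\<exists>s\<in>TS. s > x"
proof -
  have "\<not> bdd_above TS" using ts_props[OF assms] by simp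
  then show ?thesis unfolding bdd_above_def by (meson not_le)
qed

lemma sig_ne: assumes "time_scale0 TS" shows "{s\<in>TS. s > t} \<noteq> {}" "bdd_below {s\<in>TS. s > t}"
proof -
  show "{s\<in>TS. s > t} \<noteq> {}" using ts_above[OF assms, of t] by blast
  show "bdd_below {s\<in>TS. s > t}" by (rule bdd_belowI[of _ t]) simp
qed

lemma sigma_ge: assumes "time_scale0 TS" shows "t \<le> sigma_ts TS t"
  unfolding sigma_ts_def using sig_ne[OF assms, of t] by (auto intro!: cInf_greatest)

lemma sigma_le: assumes "time_scale0 TS" "s \<in> TS" "t < s" shows "sigma_ts TS t \<le> s"
  unfolding sigma_ts_def by (rule cInf_lower) (use assms sig_ne(2)[OF assms(1), of t] in auto)

lemma sigma_in: assumes "time_scale0 TS" shows "sigma_ts TS t \<in> TS"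
  unfolding sigma_ts_def
  by (rule closed_subset_contains_Inf[OF ts_props(1)[OF assms] _ sig_ne[OF assms]]) blast

lemma sigma_rd: assumes "time_scale0 TS" "sigma_ts TS t < y" shows "\<exists>s\<in>TS. t < s \<and> s < y"
proof -
  have "\<exists>x\<in>{s\<in>TS. s > t}. x < y"
    using assms(2) cInf_less_iff[OF sig_ne[OF assms(1), of t], of y] unfolding sigma_ts_def by blast
  then show ?thesis by blast
qed

lemma eps_zero: fixes x c :: real assumes "\<And>e. e > 0 \<Longrightarrow> \<bar>x\<bar> \<le> e * c" "c \<ge> 0" shows "x = 0"
proof (rule ccontr)
  assume "x \<noteq> 0"
  show False
  proof (cases "c = 0")
    case True then show False using assms(1)[of 1] \<open>x \<noteq> 0\<close> by simp
  next
    case False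
    then have "c > 0" using assms(2) by simp
    have "\<bar>x\<bar> \<le> (\<bar>x\<bar>/(2*c)) * c" using assms(1)[of "\<bar>x\<bar>/(2*c)"] \<open>x\<noteq>0\<close> \<open>c>0\<close> by simp
    also have "\<dots> = \<bar>x\<bar>/2" using \<open>c>0\<close> by simp
    finally show False using \<open>x\<noteq>0\<close> by simp
  qed
qed

lemma dd_sigma:
  assumes "has_delta_derivative TS f D t" "t \<in> TS"
  shows "f (sigma_ts TS t) = f t + (sigma_ts TS t - t) * D"
proof -
  have "\<bar>f (sigma_ts TS t) - f t - D * (sigma_ts TS t - t)\<bar> \<le> e * \<bar>sigma_ts TS t - t\<bar>" if "e > 0" for e
  proof -
    obtain d where "d > 0" and d: "\<forall>s\<in>TS. \<bar>s - t\<bar> < d \<longrightarrow>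
        \<bar>(f (sigma_ts TS t) - f s) - D * (sigma_ts TS t - s)\<bar> \<le> e * \<bar>sigma_ts TS t - s\<bar>"
      using assms \<open>e>0\<close> unfolding has_delta_derivative_def by blast
    then show ?thesis using assms(2) by auto
  qed
  then have "f (sigma_ts TS t) - f t - D * (sigma_ts TS t - t) = 0" by (rule eps_zero) auto
  then show ?thesis by (simp add: algebra_simps)
qed

lemma dd_cont:
  assumes ts: "time_scale0 TS" and dd: "has_delta_derivative TS f D t" and tT: "t \<in> TS" and e: "e > 0"
  shows "\<exists>d>0. \<forall>s\<in>TS. \<bar>s - t\<bar> < d \<longrightarrow> \<bar>f s - f t\<bar> < e"
proof -
  define m where "m = sigma_ts TS t - t"
  have m0: "m \<ge> 0" using sigma_ge[OF ts, of t] unfolding m_def by simp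
  define e1 where "e1 = e / (2 * (m + 1))"
  have e1: "e1 > 0" unfolding e1_def using e m0 by simp
  obtain d1 where "d1 > 0" and d1: "\<forall>s\<in>TS. \<bar>s - t\<bar> < d1 \<longrightarrow>
        \<bar>(f (sigma_ts TS t) - f s) - D * (sigma_ts TS t - s)\<bar> \<le> e1 * \<bar>sigma_ts TS t - s\<bar>"
    using dd e1 unfolding has_delta_derivative_def by blast
  have sig: "f (sigma_ts TS t) = f t + m * D" using dd_sigma[OF dd tT] unfolding m_def by simp
  define d where "d = min d1 (min 1 (e / (2 * (\<bar>D\<bar> + 1))))"
  have "d > 0" unfolding d_def using \<open>d1>0\<close> e by simp
  moreover have "\<bar>f s - f t\<bar> < e" if s: "s \<in> TS" "\<bar>s - t\<bar> < d" for s
  proof -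
    have h1: "\<bar>(f (sigma_ts TS t) - f s) - D * (sigma_ts TS t - s)\<bar> \<le> e1 * \<bar>sigma_ts TS t - s\<bar>"
      using d1 s unfolding d_def by simp
    have "\<bar>sigma_ts TS t - s\<bar> \<le> m + 1" using s m0 unfolding d_def m_def by linarith
    then have "e1 * \<bar>sigma_ts TS t - s\<bar> \<le> e1 * (m + 1)" using e1 by (simp add: mult_left_mono)
    also have "\<dots> = e / 2" proof - have "m + 1 > 0" using m0 by simp then show ?thesis unfolding e1_def by (simp add: field_simps) qed
    finally have X: "\<bar>f t - f s + D * (s - t)\<bar> \<le> e / 2"
      using h1 sig unfolding m_def by (simp add: algebra_simps)
    have "\<bar>D\<bar> * \<bar>s - t\<bar> \<le> \<bar>D\<bar> * (e / (2 * (\<bar>D\<bar> + 1)))"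
      using s unfolding d_def by (intro mult_left_mono) auto
    also have "\<dots> < e / 2"
    proof -
      have "\<bar>D\<bar> * (e / (2 * (\<bar>D\<bar> + 1))) = (e/2) * (\<bar>D\<bar> / (\<bar>D\<bar> + 1))" by (simp add: field_simps)
      also have "\<dots> < (e/2) * 1" using e by (intro mult_strict_left_mono) auto
      finally show ?thesis by simp
    qed
    finally have Y: "\<bar>D * (s - t)\<bar> < e / 2" by (simp add: abs_mult)
    show ?thesis using X Y by linarith
  qed
  ultimately show ?thesis by blast
qed

abbreviation "hdd \<equiv> has_delta_derivative"

lemma dd_add:
  assumes "hdd TS f Df t" "hdd TS g Dg t"
  shows "hdd TS (\<lambda>x. f x + g x) (Df + Dg) t"
  unfolding has_delta_derivative_def
proof (intro allI impI)
  fix e :: real assume e: "e > 0"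
  have e2: "e/2 > 0" using e by simp
  obtain d1 where "d1 > 0" and d1: "\<forall>s\<in>TS. \<bar>s - t\<bar> < d1 \<longrightarrow>
        \<bar>(f (sigma_ts TS t) - f s) - Df * (sigma_ts TS t - s)\<bar> \<le> (e/2) * \<bar>sigma_ts TS t - s\<bar>"
    using assms(1) e2 unfolding has_delta_derivative_def by blast
  obtain d2 where "d2 > 0" and d2: "\<forall>s\<in>TS. \<bar>s - t\<bar> < d2 \<longrightarrow>
        \<bar>(g (sigma_ts TS t) - g s) - Dg * (sigma_ts TS t - s)\<bar> \<le> (e/2) * \<bar>sigma_ts TS t - s\<bar>"
    using assms(2) e2 unfolding has_delta_derivative_def by blast
  show "\<exists>d>0. \<forall>s\<in>TS. \<bar>s - t\<bar> < d \<longrightarrow>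
     \<bar>f (sigma_ts TS t) + g (sigma_ts TS t) - (f s + g s) - (Df + Dg) * (sigma_ts TS t - s)\<bar>
     \<le> e * \<bar>sigma_ts TS t - s\<bar>"
  proof (intro exI[of _ "min d1 d2"] conjI ballI impI)
    show "min d1 d2 > 0" using \<open>d1>0\<close> \<open>d2>0\<close> by simp
    fix s assume s: "s \<in> TS" "\<bar>s - t\<bar> < min d1 d2"
    have A: "\<bar>(f (sigma_ts TS t) - f s) - Df * (sigma_ts TS t - s)\<bar> \<le> (e/2) * \<bar>sigma_ts TS t - s\<bar>"
      using d1 s by simp
    have B: "\<bar>(g (sigma_ts TS t) - g s) - Dg * (sigma_ts TS t - s)\<bar> \<le> (e/2) * \<bar>sigma_ts TS t - s\<bar>"
      using d2 s by simp
    have "\<bar>f (sigma_ts TS t) + g (sigma_ts TS t) - (f s + g s) - (Df + Dg) * (sigma_ts TS t - s)\<bar>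
      = \<bar>((f (sigma_ts TS t) - f s) - Df * (sigma_ts TS t - s)) + ((g (sigma_ts TS t) - g s) - Dg * (sigma_ts TS t - s))\<bar>"
      by (simp add: algebra_simps)
    also have "\<dots> \<le> (e/2) * \<bar>sigma_ts TS t - s\<bar> + (e/2) * \<bar>sigma_ts TS t - s\<bar>"
      using A B abs_triangle_ineq[of "(f (sigma_ts TS t) - f s) - Df * (sigma_ts TS t - s)" "(g (sigma_ts TS t) - g s) - Dg * (sigma_ts TS t - s)"] by linarith
    finally show "\<bar>f (sigma_ts TS t) + g (sigma_ts TS t) - (f s + g s) - (Df + Dg) * (sigma_ts TS t - s)\<bar>
     \<le> e * \<bar>sigma_ts TS t - s\<bar>" by simp
  qed
qed

lemma dd_cmul:
  assumes "hdd TS f D t"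
  shows "hdd TS (\<lambda>x. c * f x) (c * D) t"
  unfolding has_delta_derivative_def
proof (intro allI impI)
  fix e :: real assume e: "e > 0"
  show "\<exists>d>0. \<forall>s\<in>TS. \<bar>s - t\<bar> < d \<longrightarrow>
     \<bar>c * f (sigma_ts TS t) - c * f s - c * D * (sigma_ts TS t - s)\<bar> \<le> e * \<bar>sigma_ts TS t - s\<bar>"
  proof (cases "c = 0")
    case True then show ?thesis using e by (intro exI[of _ 1]) simp
  next
    case False
    then have "e / \<bar>c\<bar> > 0" using e by simp
    then obtain d where "d > 0" and d: "\<forall>s\<in>TS. \<bar>s - t\<bar> < d \<longrightarrow>
        \<bar>(f (sigma_ts TS t) - f s) - D * (sigma_ts TS t - s)\<bar> \<le> (e / \<bar>c\<bar>) * \<bar>sigma_ts TS t - s\<bar>"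
      using assms unfolding has_delta_derivative_def by blast
    show ?thesis
    proof (intro exI[of _ d] conjI ballI impI)
      show "d > 0" by fact
      fix s assume s: "s \<in> TS" "\<bar>s - t\<bar> < d"
      have "\<bar>c * f (sigma_ts TS t) - c * f s - c * D * (sigma_ts TS t - s)\<bar>
          = \<bar>c\<bar> * \<bar>(f (sigma_ts TS t) - f s) - D * (sigma_ts TS t - s)\<bar>"
        by (simp add: abs_mult[symmetric] algebra_simps)
      also have "\<dots> \<le> \<bar>c\<bar> * ((e / \<bar>c\<bar>) * \<bar>sigma_ts TS t - s\<bar>)"
        using d s by (intro mult_left_mono) auto
      also have "\<dots> = e * \<bar>sigma_ts TS t - s\<bar>" using False by simp
      finally show "\<bar>c * f (sigma_ts TS t) - c * f s - c * D * (sigma_ts TS t - s)\<bar> \<le> e * \<bar>sigma_ts TS t - s\<bar>" .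
    qed
  qed
qed

lemma dd_lin: "hdd TS (\<lambda>x. a * x + b) a t"
  unfolding has_delta_derivative_def
  by (intro allI impI exI[of _ 1]) (simp add: algebra_simps)

lemma dd_const: "hdd TS (\<lambda>x. b) 0 t"
  using dd_lin[of TS 0 b t] by simp

lemma dd_diff:
  assumes "hdd TS f Df t" "hdd TS g Dg t"
  shows "hdd TS (\<lambda>x. f x - g x) (Df - Dg) t"
  using dd_add[OF assms(1) dd_cmul[OF assms(2), of "-1"]] by simp

lemma dd_sum:
  fixes n :: nat
  assumes "\<And>j. j < n \<Longrightarrow> hdd TS (f j) (D j) t"
  shows "hdd TS (\<lambda>x. \<Sum>j<n. f j x) (\<Sum>j<n. D j) t"
  using assms
proof (induction n)
  case 0 then show ?case using dd_const[of TS 0 t] by simp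
next
  case (Suc n)
  have "hdd TS (\<lambda>x. (\<Sum>j<n. f j x) + f n x) ((\<Sum>j<n. D j) + D n) t"
    using Suc by (intro dd_add) auto
  then show ?case by simp
qed

lemma ld_closed:
  assumes ts: "time_scale0 TS" and dd: "hdd TS F D t" and tT: "t \<in> TS" and at: "a < t"
    and ld: "\<forall>e>0. \<exists>s\<in>TS. t - e < s \<and> s < t"
    and H: "\<forall>s\<in>TS. a \<le> s \<longrightarrow> s < t \<longrightarrow> F s \<le> 0"
  shows "F t \<le> 0"
proof (rule field_le_epsilon)
  fix e :: real assume e: "e > 0"
  obtain d where "d > 0" and d: "\<forall>s\<in>TS. \<bar>s - t\<bar> < d \<longrightarrow> \<bar>F s - F t\<bar> < e"
    using dd_cont[OF ts dd tT e] by blast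
  have "min d (t - a) > 0" using \<open>d>0\<close> at by simp
  then obtain s where s: "s \<in> TS" "t - min d (t - a) < s" "s < t"
    using ld by blast
  have "F s \<le> 0" using H s by simp
  moreover have "\<bar>F s - F t\<bar> < e" using d s by simp
  ultimately show "F t \<le> 0 + e" by linarith
qed

lemma ts_induct:
  assumes ts: "time_scale0 TS" and aT: "a \<in> TS" and base: "P a"
  and rs: "\<And>t. t\<in>TS \<Longrightarrow> a \<le> t \<Longrightarrow> t < b \<Longrightarrow> t < sigma_ts TS t \<Longrightarrow> P t \<Longrightarrow> P (sigma_ts TS t)"
  and rd: "\<And>t. t\<in>TS \<Longrightarrow> a \<le> t \<Longrightarrow> t < b \<Longrightarrow> sigma_ts TS t = t \<Longrightarrow> P t \<Longrightarrow>
              \<exists>e>0. \<forall>s\<in>TS. t < s \<longrightarrow> s < t + e \<longrightarrow> P s"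
  and ld: "\<And>t. t\<in>TS \<Longrightarrow> a < t \<Longrightarrow> t \<le> b \<Longrightarrow> (\<forall>s\<in>TS. a \<le> s \<longrightarrow> s < t \<longrightarrow> P s) \<Longrightarrow>
              (\<forall>e>0. \<exists>s\<in>TS. t - e < s \<and> s < t) \<Longrightarrow> P t"
  and tT: "t \<in> TS" "a \<le> t" "t \<le> b"
  shows "P t"
proof (rule ccontr)
  assume nP: "\<not> P t"
  define X where "X = {x\<in>TS. a \<le> x \<and> x \<le> b \<and> \<not> P x}"
  have tX: "t \<in> X" using tT nP unfolding X_def by blast
  then have Xne: "X \<noteq> {}" by blast
  have Xbdd: "bdd_below X" unfolding X_def by (rule bdd_belowI[of _ a]) simp
  define m where "m = Inf X"
  have mT: "m \<in> TS" unfolding m_def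
    by (rule closed_subset_contains_Inf[OF ts_props(1)[OF ts] _ Xne Xbdd]) (auto simp: X_def)
  have mlow: "m \<le> x" if "x \<in> X" for x unfolding m_def using that Xbdd by (rule cInf_lower)
  have am: "a \<le> m" unfolding m_def by (rule cInf_greatest[OF Xne]) (simp add: X_def)
  have mb: "m \<le> b" using mlow[OF tX] tT by simp
  have H: "\<forall>s\<in>TS. a \<le> s \<longrightarrow> s < m \<longrightarrow> P s"
  proof (intro ballI impI)
    fix s assume s: "s \<in> TS" "a \<le> s" "s < m"
    show "P s"
    proof (rule ccontr)
      assume "\<not> P s"
      then have "s \<in> X" using s mb unfolding X_def by simp
      then have "m \<le> s" by (rule mlow)
      then show False using s by simp
    qed
  qed
  have Pm: "P m"
  proof (cases "m = a")
    case True then show ?thesis using base by simp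
  next
    case False then have am': "a < m" using am by simp
    show ?thesis
    proof (cases "\<forall>e>0. \<exists>s\<in>TS. m - e < s \<and> s < m")
      case True then show ?thesis using ld[OF mT am' mb H] by simp
    next
      case False
      then obtain e where e: "e > 0" "\<forall>s\<in>TS. \<not> (m - e < s \<and> s < m)" by blast
      define Y where "Y = {s\<in>TS. a \<le> s \<and> s < m}"
      have aY: "a \<in> Y" using aT am' by (simp add: Y_def)
      then have Yne: "Y \<noteq> {}" by blast
      have Ybdd: "bdd_above Y" by (rule bdd_aboveI[of _ m]) (simp add: Y_def)
      define r where "r = Sup Y"
      have rT: "r \<in> TS" unfolding r_def
        by (rule closed_subset_contains_Sup[OF ts_props(1)[OF ts] _ Yne Ybdd]) (auto simp: Y_def)
      have ar: "a \<le> r" unfolding r_def using aY Ybdd by (rule cSup_upper)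
      have rle: "r \<le> m - e" unfolding r_def
      proof (rule cSup_least[OF Yne])
        fix y assume "y \<in> Y"
        then have "y \<in> TS" "y < m" by (auto simp: Y_def)
        then have "\<not> (m - e < y)" using e(2) by blast
        then show "y \<le> m - e" by simp
      qed
      have rm: "r < m" using rle e by simp
      have Pr: "P r" using H rT ar rm by simp
      have srm: "sigma_ts TS r \<le> m" using sigma_le[OF ts mT rm] .
      have sr: "sigma_ts TS r = m"
      proof (rule ccontr)
        assume "sigma_ts TS r \<noteq> m"
        then have "sigma_ts TS r < m" using srm by simp
        then obtain s where s: "s \<in> TS" "r < s" "s < m" using sigma_rd[OF ts] by blast
        then have "s \<in> Y" using ar by (simp add: Y_def)
        then have "s \<le> r" unfolding r_def using Ybdd by (rule cSup_upper)
        then show False using s by simp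
      qed
      have "P (sigma_ts TS r)" using rs[OF rT ar _ _ Pr] rm mb sr by simp
      then show ?thesis using sr by simp
    qed
  qed
  have tm: "t \<noteq> m" using Pm nP by blast
  have mlb: "m < b" using mlow[OF tX] tm tT by simp
  show False
  proof (cases "m < sigma_ts TS m")
    case True
    have "sigma_ts TS m \<le> m" unfolding m_def
    proof (rule cInf_greatest[OF Xne])
      fix x assume xX: "x \<in> X"
      then have "x \<in> TS" "\<not> P x" by (auto simp: X_def)
      moreover have "m \<le> x" using mlow[OF xX] .
      ultimately have "m < x" using Pm by (cases "x = m") auto
      then show "sigma_ts TS (Inf X) \<le> x" using sigma_le[OF ts \<open>x \<in> TS\<close>] unfolding m_def by simp
    qed
    then show False using True by simp
  next
    case False
    then have sm: "sigma_ts TS m = m" using sigma_ge[OF ts, of m] by simp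
    obtain e where e: "e > 0" "\<forall>s\<in>TS. m < s \<longrightarrow> s < m + e \<longrightarrow> P s"
      using rd[OF mT am mlb sm Pm] by blast
    have "m + e \<le> m" unfolding m_def
    proof (rule cInf_greatest[OF Xne])
      fix x assume xX: "x \<in> X"
      then have xT: "x \<in> TS" and nx: "\<not> P x" by (auto simp: X_def)
      moreover have "m \<le> x" using mlow[OF xX] .
      ultimately have "m < x" using Pm by (cases "x = m") auto
      then have "\<not> x < m + e" using e(2) xT nx by blast
      then show "Inf X + e \<le> x" unfolding m_def by simp
    qed
    then show False using e by simp
  qed
qed

lemma ts_mono:
  assumes ts: "time_scale0 TS" and aT: "a \<in> TS"
    and der: "\<And>t. t\<in>TS \<Longrightarrow> a \<le> t \<Longrightarrow> t \<le> b \<Longrightarrow> \<exists>D. hdd TS F D t \<and> D \<le> 0"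
    and tT: "t \<in> TS" "a \<le> t" "t \<le> b"
  shows "F t \<le> F a"
proof -
  have main: "F t \<le> F a + ep * (t - a)" if ep: "ep > 0" for ep
  proof (rule ts_induct[where P = "\<lambda>x. F x \<le> F a + ep * (x - a)" and a = a and b = b, OF ts aT])
    show "F a \<le> F a + ep * (a - a)" by simp
  next
    fix x assume x: "x \<in> TS" "a \<le> x" "x < b" "x < sigma_ts TS x" and Px: "F x \<le> F a + ep * (x - a)"
    obtain D where D: "hdd TS F D x" "D \<le> 0" using der x by force
    have "F (sigma_ts TS x) = F x + (sigma_ts TS x - x) * D" using dd_sigma[OF D(1) x(1)] .
    also have "\<dots> \<le> F x" using D(2) x(4) by (simp add: mult_nonneg_nonpos)
    also have "\<dots> \<le> F a + ep * (x - a)" by (rule Px)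
    also have "\<dots> \<le> F a + ep * (sigma_ts TS x - a)" using ep x(4) by simp
    finally show "F (sigma_ts TS x) \<le> F a + ep * (sigma_ts TS x - a)" .
  next
    fix x assume x: "x \<in> TS" "a \<le> x" "x < b" "sigma_ts TS x = x" and Px: "F x \<le> F a + ep * (x - a)"
    obtain D where D: "hdd TS F D x" "D \<le> 0" using der x by force
    obtain d where "d > 0" and d: "\<forall>s\<in>TS. \<bar>s - x\<bar> < d \<longrightarrow>
        \<bar>(F (sigma_ts TS x) - F s) - D * (sigma_ts TS x - s)\<bar> \<le> ep * \<bar>sigma_ts TS x - s\<bar>"
      using D(1) ep unfolding has_delta_derivative_def by blast
    show "\<exists>e>0. \<forall>s\<in>TS. x < s \<longrightarrow> s < x + e \<longrightarrow> F s \<le> F a + ep * (s - a)"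
    proof (intro exI[of _ d] conjI ballI impI)
      show "d > 0" by fact
      fix s assume s: "s \<in> TS" "x < s" "s < x + d"
      have sd: "\<bar>s - x\<bar> < d" using s by simp
      have "\<bar>(F (sigma_ts TS x) - F s) - D * (sigma_ts TS x - s)\<bar> \<le> ep * \<bar>sigma_ts TS x - s\<bar>"
        using d s(1) sd by blast
      then have "\<bar>(F x - F s) - D * (x - s)\<bar> \<le> ep * \<bar>x - s\<bar>" using x(4) by simp
      then have "F s \<le> F x + D * (s - x) + ep * (s - x)" using s by (simp add: abs_if algebra_simps split: if_splits)
      moreover have "D * (s - x) \<le> 0" using D(2) s by (simp add: mult_nonpos_nonneg)
      ultimately have "F s \<le> F x + ep * (s - x)" by linarith
      also have "\<dots> \<le> F a + ep * (x - a) + ep * (s - x)" using Px by simp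
      also have "\<dots> = F a + ep * (s - a)" by (simp add: algebra_simps)
      finally show "F s \<le> F a + ep * (s - a)" .
    qed
  next
    fix x assume x: "x \<in> TS" "a < x" "x \<le> b"
      and H: "\<forall>s\<in>TS. a \<le> s \<longrightarrow> s < x \<longrightarrow> F s \<le> F a + ep * (s - a)"
      and ld: "\<forall>e>0. \<exists>s\<in>TS. x - e < s \<and> s < x"
    obtain D where D: "hdd TS F D x" "D \<le> 0" using der x by force
    have G: "hdd TS (\<lambda>y. F y - (ep * y + (F a - ep * a))) (D - ep) x"
      by (rule dd_diff[OF D(1) dd_lin])
    have "F x - (ep * x + (F a - ep * a)) \<le> 0"
      by (rule ld_closed[OF ts G x(1) x(2) ld]) (use H in \<open>auto simp: algebra_simps\<close>)
    then show "F x \<le> F a + ep * (x - a)" by (simp add: algebra_simps)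
  qed (use tT in auto)
  show ?thesis
  proof (cases "t = a")
    case True then show ?thesis by simp
  next
    case False
    then have ta: "t - a > 0" using tT by simp
    show ?thesis
    proof (rule field_le_epsilon)
      fix e :: real assume "e > 0"
      then have "e / (t - a) > 0" using ta by simp
      then have "F t \<le> F a + (e / (t - a)) * (t - a)" by (rule main)
      then show "F t \<le> F a + e" using ta by simp
    qed
  qed
qed

context
  fixes TS :: "real set" and A k mux :: real and u :: "real \<Rightarrow> real \<Rightarrow> real"
  assumes ts: "time_scale0 TS" and A0: "A > 0" and k0: "k > 0" and mux0: "mux > 0"
    and TS1: "\<forall>t\<in>TS. 1 - k * graininess TS t / mux > 0"
    and sol: "solves_P TS A k mux u"
begin

lemma der: "t \<in> TS \<Longrightarrow> hdd TS (u (of_int n * mux))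
   (- k * (u (of_int n * mux) t - u (of_int (n - 1) * mux) t) / mux) t"
proof -
  assume t: "t \<in> TS"
  have "of_int n * mux - mux = of_int (n - 1) * mux" by (simp add: algebra_simps)
  moreover have "hdd TS (\<lambda>s. u (of_int n * mux) s)
         (- k * (u (of_int n * mux) t - u (of_int n * mux - mux) t) / mux) t"
    using sol t unfolding solves_P_def by blast
  ultimately show ?thesis by simp
qed

lemma init0: "u 0 0 = A" using sol unfolding solves_P_def by blast
lemma initn: "n \<noteq> 0 \<Longrightarrow> u (of_int n * mux) 0 = 0" using sol unfolding solves_P_def by blast
lemma bnd: "T0 > 0 \<Longrightarrow> \<exists>B. \<forall>n::int. \<forall>t\<in>TS. t \<le> T0 \<longrightarrow> \<bar>u (of_int n * mux) t\<bar> \<le> B"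
  using sol unfolding solves_P_def by blast

lemma neg_local:
  assumes xT: "x \<in> TS" and Px: "\<forall>n::int. n < 0 \<longrightarrow> u (of_int n * mux) x = 0"
  shows "\<forall>n::int. n < 0 \<longrightarrow> (\<forall>s\<in>TS. x \<le> s \<longrightarrow> s \<le> x + mux / (4 * k) \<longrightarrow> u (of_int n * mux) s = 0)"
proof -
  define h where "h = mux / (4 * k)"
  have h0: "h > 0" unfolding h_def using mux0 k0 by simp
  have x0: "x \<ge> 0" using ts_props(3)[OF ts xT] .
  obtain B where B: "\<forall>n::int. \<forall>t\<in>TS. t \<le> x + h \<longrightarrow> \<bar>u (of_int n * mux) t\<bar> \<le> B"
    using bnd[of "x + h"] h0 x0 by auto
  define S where "S = (\<lambda>(n, s). \<bar>u (of_int n * mux) s\<bar>) ` ({n::int. n < 0} \<times> {s\<in>TS. x \<le> s \<and> s \<le> x + h})"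
  have inS: "\<bar>u (of_int n * mux) s\<bar> \<in> S" if "n < 0" "s \<in> TS" "x \<le> s" "s \<le> x + h" for n s
    unfolding S_def using that by (intro image_eqI[of _ _ "(n, s)"]) auto
  have Sne: "S \<noteq> {}" using inS[of "-1" x] xT h0 by auto
  have Sbdd: "bdd_above S" unfolding S_def by (rule bdd_aboveI[of _ B]) (use B in auto)
  define M where "M = Sup S"
  have leM: "\<bar>u (of_int n * mux) s\<bar> \<le> M" if "n < 0" "s \<in> TS" "x \<le> s" "s \<le> x + h" for n s
    unfolding M_def using inS[OF that] Sbdd by (rule cSup_upper)
  have "\<bar>u (of_int (-1) * mux) x\<bar> \<le> M" using leM[of "-1" x] xT h0 by simp
  then have M0: "M \<ge> 0" by (meson abs_ge_zero order_trans)
  define K where "K = 2 * k * M / mux"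
  have Kh: "K * h = M / 2" unfolding K_def h_def using k0 mux0 by (simp add: field_simps)
  have half: "\<bar>u (of_int n * mux) s\<bar> \<le> M / 2" if n: "n < 0" and s: "s \<in> TS" "x \<le> s" "s \<le> x + h" for n s
  proof -
    define D where "D = (\<lambda>y. - k * (u (of_int n * mux) y - u (of_int (n - 1) * mux) y) / mux)"
    have Dle: "\<bar>D y\<bar> \<le> K" if y: "y \<in> TS" "x \<le> y" "y \<le> s" for y
    proof -
      have "\<bar>u (of_int n * mux) y\<bar> \<le> M" using leM[of n y] n y s by simp
      moreover have "\<bar>u (of_int (n - 1) * mux) y\<bar> \<le> M" using leM[of "n - 1" y] n y s by simp
      ultimately have "\<bar>u (of_int n * mux) y - u (of_int (n - 1) * mux) y\<bar> \<le> 2 * M" by linarith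
      then have "k * \<bar>u (of_int n * mux) y - u (of_int (n - 1) * mux) y\<bar> / mux \<le> k * (2 * M) / mux"
        using k0 mux0 by (intro divide_right_mono mult_left_mono) auto
      moreover have "k * (2 * M) / mux = K" unfolding K_def by simp
      moreover have "\<bar>D y\<bar> = k * \<bar>u (of_int n * mux) y - u (of_int (n - 1) * mux) y\<bar> / mux"
        unfolding D_def using k0 mux0 by (simp add: abs_mult abs_divide)
      ultimately show ?thesis by simp
    qed
    have d1: "hdd TS (\<lambda>y. u (of_int n * mux) y - (K * y + 0)) (D y - K) y" if "y \<in> TS" for y
      unfolding D_def by (rule dd_diff[OF der[OF that] dd_lin])
    have d2: "hdd TS (\<lambda>y. (-1) * u (of_int n * mux) y - (K * y + 0)) ((-1) * D y - K) y" if "y \<in> TS" for y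
      unfolding D_def by (rule dd_diff[OF dd_cmul[OF der[OF that]] dd_lin])
    have "u (of_int n * mux) s - (K * s + 0) \<le> u (of_int n * mux) x - (K * x + 0)"
      by (rule ts_mono[OF ts xT, where b = s]) (use d1 Dle s in \<open>force+\<close>)
    moreover have "(-1) * u (of_int n * mux) s - (K * s + 0) \<le> (-1) * u (of_int n * mux) x - (K * x + 0)"
      by (rule ts_mono[OF ts xT, where b = s]) (use d2 Dle s in \<open>force+\<close>)
    moreover have "u (of_int n * mux) x = 0" using Px n by simp
    moreover have "K * (s - x) \<le> K * h"
      using s K_def k0 mux0 M0 by (intro mult_left_mono) auto
    ultimately show ?thesis using Kh by (simp add: algebra_simps abs_le_iff)
  qed
  have "M \<le> M / 2" unfolding M_def[symmetric]
  proof -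
    have "Sup S \<le> M / 2"
    proof (rule cSup_least[OF Sne])
      fix z assume "z \<in> S"
      then obtain n s where "n < 0" "s \<in> TS" "x \<le> s" "s \<le> x + h" "z = \<bar>u (of_int n * mux) s\<bar>"
        unfolding S_def by auto
      then show "z \<le> M / 2" using half by simp
    qed
    then show ?thesis unfolding M_def .
  qed
  then have "M = 0" using M0 by simp
  then show ?thesis using leM unfolding h_def by fastforce
qed


lemma neg_zero:
  assumes tT: "t \<in> TS"
  shows "\<forall>n::int. n < 0 \<longrightarrow> u (of_int n * mux) t = 0"
proof (rule ts_induct[where P = "\<lambda>x. \<forall>n::int. n < 0 \<longrightarrow> u (of_int n * mux) x = 0" and a = 0 and b = t,
       OF ts ts_props(2)[OF ts]])
  show "\<forall>n::int. n < 0 \<longrightarrow> u (of_int n * mux) 0 = 0" using initn by simp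
next
  fix x assume x: "x \<in> TS" and Px: "\<forall>n::int. n < 0 \<longrightarrow> u (of_int n * mux) x = 0"
  show "\<forall>n::int. n < 0 \<longrightarrow> u (of_int n * mux) (sigma_ts TS x) = 0"
  proof (intro allI impI)
    fix n :: int assume n: "n < 0"
    have "u (of_int n * mux) (sigma_ts TS x) = u (of_int n * mux) x + (sigma_ts TS x - x) *
        (- k * (u (of_int n * mux) x - u (of_int (n - 1) * mux) x) / mux)"
      by (rule dd_sigma[OF der[OF x] x])
    moreover have z0: "u (of_int n * mux) x = 0" using Px n by blast
    moreover have "n - 1 < 0" using n by simp
    then have z1: "u (of_int (n - 1) * mux) x = 0" using Px by blast
    ultimately show "u (of_int n * mux) (sigma_ts TS x) = 0" by simp
  qed
next
  fix x assume x: "x \<in> TS" and Px: "\<forall>n::int. n < 0 \<longrightarrow> u (of_int n * mux) x = 0"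
  have "mux / (4 * k) > 0" using mux0 k0 by simp
  then show "\<exists>e>0. \<forall>s\<in>TS. x < s \<longrightarrow> s < x + e \<longrightarrow> (\<forall>n::int. n < 0 \<longrightarrow> u (of_int n * mux) s = 0)"
    using neg_local[OF x Px] by (intro exI[of _ "mux / (4 * k)"]) auto
next
  fix x assume x: "x \<in> TS" "0 < x"
    and H: "\<forall>s\<in>TS. 0 \<le> s \<longrightarrow> s < x \<longrightarrow> (\<forall>n::int. n < 0 \<longrightarrow> u (of_int n * mux) s = 0)"
    and ld: "\<forall>e>0. \<exists>s\<in>TS. x - e < s \<and> s < x"
  show "\<forall>n::int. n < 0 \<longrightarrow> u (of_int n * mux) x = 0"
  proof (intro allI impI)
    fix n :: int assume n: "n < 0"
    have "u (of_int n * mux) x \<le> 0"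
      by (rule ld_closed[OF ts der[OF x(1)] x(1) x(2) ld]) (use H n in auto)
    moreover have "(-1) * u (of_int n * mux) x \<le> 0"
      by (rule ld_closed[OF ts dd_cmul[OF der[OF x(1)]] x(1) x(2) ld]) (use H n in auto)
    ultimately show "u (of_int n * mux) x = 0" by simp
  qed
qed (use tT ts_props(3)[OF ts tT] in auto)

lemma neg1: "t \<in> TS \<Longrightarrow> u (- mux) t = 0"
  using neg_zero[of t] by (metis mult_minus1 neg_less_0_iff_less of_int_1 of_int_minus zero_less_one)

lemma derN: "t \<in> TS \<Longrightarrow> hdd TS (u (real n * mux))
   (- k * (u (real n * mux) t - u (real n * mux - mux) t) / mux) t"
proof -
  assume t: "t \<in> TS"
  have "of_int (int n - 1) * mux = real n * mux - mux" by (simp add: algebra_simps)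
  then show ?thesis using der[OF t, of "int n"] by simp
qed

lemma nonneg_gen:
  assumes dv: "\<And>t. t \<in> TS \<Longrightarrow> hdd TS v (- k * (v t - w t) / mux) t"
    and w0: "\<And>t. t \<in> TS \<Longrightarrow> w t \<ge> 0" and v0: "v 0 \<ge> 0" and tT: "t \<in> TS"
  shows "v t \<ge> 0"
proof -
  have main: "v t \<ge> - ep" if ep: "ep > 0" for ep
  proof (rule ts_induct[where P = "\<lambda>x. v x \<ge> - ep" and a = 0 and b = t, OF ts ts_props(2)[OF ts]])
    show "v 0 \<ge> - ep" using v0 ep by simp
  next
    fix x assume x: "x \<in> TS" "0 \<le> x" "x < t" "x < sigma_ts TS x" and Px: "v x \<ge> - ep"
    define m where "m = sigma_ts TS x - x"
    have al: "1 - k * m / mux > 0" using TS1 x(1) unfolding m_def graininess_def by simp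
    have m0: "m \<ge> 0" using x(4) unfolding m_def by simp
    have al1: "k * m / mux \<ge> 0" using m0 k0 mux0 by simp
    have "v (sigma_ts TS x) = v x + m * (- k * (v x - w x) / mux)"
      using dd_sigma[OF dv[OF x(1)] x(1)] unfolding m_def .
    also have "\<dots> = (1 - k * m / mux) * v x + (k * m / mux) * w x"
      using mux0 by (simp add: field_simps)
    also have "\<dots> \<ge> (1 - k * m / mux) * (- ep) + 0"
      using al al1 Px w0[OF x(1)] by (intro add_mono mult_left_mono mult_nonneg_nonneg) auto
    finally have "v (sigma_ts TS x) \<ge> (1 - k * m / mux) * (- ep)" by simp
    moreover have "(1 - k * m / mux) * (- ep) \<ge> - ep"
    proof -
      have "(1 - k * m / mux) * ep \<le> 1 * ep" using al1 ep by (intro mult_right_mono) auto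
      then show ?thesis by simp
    qed
    ultimately show "v (sigma_ts TS x) \<ge> - ep" by linarith
  next
    fix x assume x: "x \<in> TS" "0 \<le> x" "x < t" "sigma_ts TS x = x" and Px: "v x \<ge> - ep"
    show "\<exists>e>0. \<forall>s\<in>TS. x < s \<longrightarrow> s < x + e \<longrightarrow> v s \<ge> - ep"
    proof (cases "v x > - ep")
      case True
      then have "v x + ep > 0" by simp
      from dd_cont[OF ts dv[OF x(1)] x(1) this] obtain d where
        "d > 0" and d: "\<forall>s\<in>TS. \<bar>s - x\<bar> < d \<longrightarrow> \<bar>v s - v x\<bar> < v x + ep" by blast
      show ?thesis
      proof (intro exI[of _ d] conjI ballI impI)
        show "d > 0" by fact
        fix s assume s: "s \<in> TS" "x < s" "s < x + d"
        then have "\<bar>v s - v x\<bar> < v x + ep" using d by simp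
        then show "v s \<ge> - ep" by linarith
      qed
    next
      case False
      then have vx: "v x = - ep" using Px by simp
      define D where "D = - k * (v x - w x) / mux"
      have "D = k * (ep + w x) / mux" unfolding D_def vx by (simp add: algebra_simps)
      moreover have "ep + w x > 0" using ep w0[OF x(1)] by simp
      ultimately have D0: "D > 0" using k0 mux0 by simp
      obtain d where "d > 0" and d: "\<forall>s\<in>TS. \<bar>s - x\<bar> < d \<longrightarrow>
        \<bar>(v (sigma_ts TS x) - v s) - D * (sigma_ts TS x - s)\<bar> \<le> D * \<bar>sigma_ts TS x - s\<bar>"
        using dv[OF x(1)] D0 unfolding has_delta_derivative_def D_def by blast
      show ?thesis
      proof (intro exI[of _ d] conjI ballI impI)
        show "d > 0" by fact
        fix s assume s: "s \<in> TS" "x < s" "s < x + d"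
        have sd: "\<bar>s - x\<bar> < d" using s by simp
        have "\<bar>(v (sigma_ts TS x) - v s) - D * (sigma_ts TS x - s)\<bar> \<le> D * \<bar>sigma_ts TS x - s\<bar>"
          using d s(1) sd by blast
        then have "\<bar>(v x - v s) - D * (x - s)\<bar> \<le> D * (s - x)" using x(4) s by simp
        then have "v s \<ge> v x" by (simp add: abs_le_iff algebra_simps)
        then show "v s \<ge> - ep" using vx by simp
      qed
    qed
  next
    fix x assume x: "x \<in> TS" "0 < x" "x \<le> t"
      and H: "\<forall>s\<in>TS. 0 \<le> s \<longrightarrow> s < x \<longrightarrow> v s \<ge> - ep"
      and ld: "\<forall>e>0. \<exists>s\<in>TS. x - e < s \<and> s < x"
    have "(-1) * v x - ep \<le> 0"
      by (rule ld_closed[OF ts dd_diff[OF dd_cmul[OF dv[OF x(1)]] dd_const] x(1) x(2) ld]) (use H in auto)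
    then show "v x \<ge> - ep" by simp
  qed (use tT ts_props(3)[OF ts tT] in auto)
  show ?thesis
  proof (rule ccontr)
    assume "\<not> v t \<ge> 0"
    then have "- v t / 2 > 0" by simp
    from main[OF this] show False using \<open>\<not> v t \<ge> 0\<close> by simp
  qed
qed

lemma w_nonneg: "t \<in> TS \<Longrightarrow> u (real n * mux - mux) t \<ge> 0" if IH: "\<And>t. t \<in> TS \<Longrightarrow> n > 0 \<Longrightarrow> u (real (n - 1) * mux) t \<ge> 0"
proof -
  assume t: "t \<in> TS"
  show ?thesis
  proof (cases n)
    case 0 then show ?thesis using neg1[OF t] by simp
  next
    case (Suc m)
    have e: "real n * mux - mux = real (n - 1) * mux" using Suc by (simp add: algebra_simps)
    show ?thesis unfolding e using IH[OF t] Suc by simp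
  qed
qed

lemma v0_nonneg: "u (real n * mux) 0 \<ge> 0"
proof (cases n)
  case 0 then show ?thesis using init0 A0 by simp
next
  case (Suc m)
  have "u (of_int (int n) * mux) 0 = 0" by (rule initn) (simp add: Suc)
  then show ?thesis by simp
qed

lemma nonnegN: "t \<in> TS \<Longrightarrow> u (real n * mux) t \<ge> 0"
proof (induction n arbitrary: t)
  case 0
  show ?case
    by (rule nonneg_gen[where v = "u (real 0 * mux)" and w = "u (real 0 * mux - mux)", OF derN _ v0_nonneg 0])
       (use w_nonneg[of 0] in auto)
next
  case (Suc n)
  show ?case
    by (rule nonneg_gen[where v = "u (real (Suc n) * mux)" and w = "u (real (Suc n) * mux - mux)", OF derN _ v0_nonneg Suc.prems])
       (use w_nonneg[of "Suc n"] Suc.IH in auto)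
qed


lemma tele: "t \<in> TS \<Longrightarrow> (\<Sum>j<m. u (real j * mux) t - u (real j * mux - mux) t) = u (real m * mux - mux) t"
proof (induction m)
  case 0 then show ?case using neg1[OF 0] by simp
next
  case (Suc m)
  have e: "real (Suc m) * mux - mux = real m * mux" by (simp add: algebra_simps)
  have "(\<Sum>j<Suc m. u (real j * mux) t - u (real j * mux - mux) t) = u (real m * mux) t" using Suc by simp
  then show ?case by (simp only: e)
qed

lemma sum_scale: fixes N :: nat shows "(\<Sum>j<N. - k * X j / mux) = - k * (\<Sum>j<N. X j) / mux"
  using mux0 by (induction N) (auto simp: field_simps)

lemma dP: "t \<in> TS \<Longrightarrow> hdd TS (\<lambda>x. \<Sum>j<Suc n. u (real j * mux) x) (- k * u (real n * mux) t / mux) t"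
proof -
  assume t: "t \<in> TS"
  have "hdd TS (\<lambda>x. \<Sum>j<Suc n. u (real j * mux) x)
     (\<Sum>j<Suc n. - k * (u (real j * mux) t - u (real j * mux - mux) t) / mux) t"
    by (rule dd_sum[where f = "\<lambda>j. u (real j * mux)"]) (rule derN[OF t])
  moreover have "(\<Sum>j<Suc n. - k * (u (real j * mux) t - u (real j * mux - mux) t) / mux)
      = - k * (\<Sum>j<Suc n. u (real j * mux) t - u (real j * mux - mux) t) / mux"
    by (rule sum_scale)
  moreover have "real (Suc n) * mux - mux = real n * mux" by (simp add: algebra_simps)
  ultimately show ?thesis using tele[OF t, of "Suc n"] by simp
qed

lemma Pnonneg: "t \<in> TS \<Longrightarrow> (\<Sum>j<n. u (real j * mux) t) \<ge> 0"
  using nonnegN by (simp add: sum_nonneg)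

lemma Pmono:
  assumes sT: "s \<in> TS" and tT: "t \<in> TS" and st: "s \<le> t"
  shows "(\<Sum>j<Suc n. u (real j * mux) t) \<le> (\<Sum>j<Suc n. u (real j * mux) s)"
proof (rule ts_mono[OF ts sT, where b = t])
  fix y assume y: "y \<in> TS"
  have "k * u (real n * mux) y / mux \<ge> 0" using nonnegN[OF y] k0 mux0 by simp
  then show "\<exists>D. hdd TS (\<lambda>x. \<Sum>j<Suc n. u (real j * mux) x) D y \<and> D \<le> 0"
    using dP[OF y] by (intro exI[of _ "- k * u (real n * mux) y / mux"]) auto
qed (use tT st in auto)

lemma decay: "ep > 0 \<Longrightarrow> \<exists>T. \<forall>t\<in>TS. T \<le> t \<longrightarrow> (\<Sum>j<n. u (real j * mux) t) < ep"
proof (induction n arbitrary: ep)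
  case 0 then show ?case by simp
next
  case (Suc n)
  define P' where "P' = (\<lambda>x. \<Sum>j<Suc n. u (real j * mux) x)"
  show ?case
  proof (rule ccontr)
    assume neg: "\<not> (\<exists>T. \<forall>t\<in>TS. T \<le> t \<longrightarrow> (\<Sum>j<Suc n. u (real j * mux) t) < ep)"
    have all: "P' t \<ge> ep" if t: "t \<in> TS" for t
    proof -
      from neg have "\<not> (\<forall>t'\<in>TS. t \<le> t' \<longrightarrow> P' t' < ep)" unfolding P'_def by blast
      then obtain t' where t': "t' \<in> TS" "t \<le> t'" "\<not> P' t' < ep" by blast
      have "P' t' \<le> P' t" unfolding P'_def by (rule Pmono[OF t t'(1,2)])
      then show ?thesis using t' by simp
    qed
    have ep2: "ep / 2 > 0" using Suc.prems by simp
    obtain T1 where T1: "\<forall>t\<in>TS. T1 \<le> t \<longrightarrow> (\<Sum>j<n. u (real j * mux) t) < ep / 2"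
      using Suc.IH[OF ep2] by blast
    obtain t1 where t1: "t1 \<in> TS" "t1 > T1" using ts_above[OF ts] by blast
    define c where "c = k * ep / (2 * mux)"
    have c0: "c > 0" unfolding c_def using k0 mux0 Suc.prems by simp
    have uge: "u (real n * mux) y \<ge> ep / 2" if y: "y \<in> TS" "t1 \<le> y" for y
    proof -
      have "P' y = (\<Sum>j<n. u (real j * mux) y) + u (real n * mux) y" unfolding P'_def by simp
      moreover have "(\<Sum>j<n. u (real j * mux) y) < ep / 2" using T1 y t1 by simp
      ultimately show ?thesis using all[OF y(1)] by simp
    qed
    obtain t2 where t2: "t2 \<in> TS" "t2 > t1 + P' t1 / c" using ts_above[OF ts] by blast
    have Pt1: "P' t1 \<ge> 0" unfolding P'_def by (rule Pnonneg[OF t1(1)])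
    then have t12: "t1 \<le> t2" using t2 c0 by (smt (verit) divide_nonneg_pos)
    have "P' t2 - ((- c) * t2 + 0) \<le> P' t1 - ((- c) * t1 + 0)"
    proof (rule ts_mono[OF ts t1(1), where b = t2])
      fix y assume y: "y \<in> TS" "t1 \<le> y" "y \<le> t2"
      have "k * u (real n * mux) y / mux \<ge> k * (ep / 2) / mux"
        using uge[OF y(1,2)] k0 mux0 by (intro divide_right_mono mult_left_mono) auto
      then have "- k * u (real n * mux) y / mux - (- c) \<le> 0" unfolding c_def by simp
      then show "\<exists>D. hdd TS (\<lambda>x. P' x - ((- c) * x + 0)) D y \<and> D \<le> 0"
        unfolding P'_def using dd_diff[OF dP[OF y(1)] dd_lin, of n "- c" 0] by blast
    qed (use t2 t12 in auto)
    then have "P' t2 \<le> P' t1 - c * (t2 - t1)" by (simp add: algebra_simps)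
    moreover have "c * (t2 - t1) > c * (P' t1 / c)" using t2 c0 by (intro mult_strict_left_mono) auto
    moreover have "c * (P' t1 / c) = P' t1" using c0 by simp
    ultimately have "P' t2 < 0" by linarith
    then show False using all[OF t2(1)] Suc.prems by simp
  qed
qed

lemma antideriv_unique:
  assumes F: "delta_antiderivative TS f F" and G: "delta_antiderivative TS f G" and bT: "b \<in> TS"
  shows "F b - F 0 = G b - G 0"
proof -
  have 0: "0 \<in> TS" "0 \<le> b" using ts_props[OF ts] bT by auto
  have "F b - G b \<le> F 0 - G 0"
    by (rule ts_mono[OF ts 0(1), where b = b and F = "\<lambda>x. F x - G x"])
       (use F G dd_diff 0 bT in \<open>fastforce simp: delta_antiderivative_def\<close>)+
  moreover have "G b - F b \<le> G 0 - F 0"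
    by (rule ts_mono[OF ts 0(1), where b = b and F = "\<lambda>x. G x - F x"])
       (use F G dd_diff 0 bT in \<open>fastforce simp: delta_antiderivative_def\<close>)+
  ultimately show ?thesis by simp
qed

lemma dint:
  assumes F: "delta_antiderivative TS f F" and bT: "b \<in> TS"
  shows "delta_integral TS f 0 b = F b - F 0"
proof -
  have ex: "\<exists>I. \<exists>F. delta_antiderivative TS f F \<and> I = F b - F 0" using F by blast
  obtain G where G: "delta_antiderivative TS f G" "delta_integral TS f 0 b = G b - G 0"
    using someI_ex[OF ex] unfolding delta_integral_def by blast
  then show ?thesis using antideriv_unique[OF F G(1) bT] by simp
qed

lemma P0: "(\<Sum>j<Suc n. u (real j * mux) 0) = A"
proof -
  have "(\<Sum>j<Suc n. u (real j * mux) 0) = u (real 0 * mux) 0 + (\<Sum>j<n. u (real (Suc j) * mux) 0)"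
    by (rule sum.lessThan_Suc_shift)
  moreover have "u (real (Suc j) * mux) 0 = 0" for j
  proof -
    have "u (of_int (int (Suc j)) * mux) 0 = 0" by (rule initn) simp
    then show ?thesis by simp
  qed
  ultimately show ?thesis using init0 by simp
qed

lemma intval:
  assumes bT: "b \<in> TS"
  shows "delta_integral TS (u (real n * mux)) 0 b = mux / k * (A - (\<Sum>j<Suc n. u (real j * mux) b))"
proof -
  define F where "F = (\<lambda>x. (- (mux / k)) * (\<Sum>j<Suc n. u (real j * mux) x))"
  have "delta_antiderivative TS (u (real n * mux)) F"
    unfolding delta_antiderivative_def
  proof
    fix t assume t: "t \<in> TS"
    have "hdd TS F ((- (mux / k)) * (- k * u (real n * mux) t / mux)) t"
      unfolding F_def by (rule dd_cmul[OF dP[OF t]])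
    moreover have "(- (mux / k)) * (- k * u (real n * mux) t / mux) = u (real n * mux) t"
      using k0 mux0 by (simp add: field_simps)
    ultimately show "hdd TS F (u (real n * mux) t) t" by simp
  qed
  then have "delta_integral TS (u (real n * mux)) 0 b = F b - F 0" using dint bT by blast
  also have "\<dots> = mux / k * (A - (\<Sum>j<Suc n. u (real j * mux) b))"
    unfolding F_def P0 by (simp add: algebra_simps)
  finally show ?thesis .
qed

lemma final: "delta_improper_integral_eq TS (u (real n * mux)) (A * mux / k)"
  unfolding delta_improper_integral_eq_def
proof -
  let ?F = "inf at_top (principal TS)"
  let ?P = "\<lambda>b. \<Sum>j<Suc n. u (real j * mux) b"
  have ev: "eventually (\<lambda>b. mux / k * (A - ?P b) = delta_integral TS (u (real n * mux)) 0 b) ?F"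
    unfolding eventually_inf_principal using intval by (auto intro!: always_eventually)
  have P0: "(?P \<longlongrightarrow> 0) ?F"
    unfolding tendsto_iff eventually_inf_principal eventually_at_top_linorder
  proof (intro allI impI)
    fix e :: real assume "e > 0"
    then obtain T where T: "\<forall>t\<in>TS. T \<le> t \<longrightarrow> ?P t < e" using decay by blast
    show "\<exists>N. \<forall>b\<ge>N. b \<in> TS \<longrightarrow> dist (?P b) 0 < e"
    proof (intro exI[of _ T] allI impI)
      fix b assume b: "T \<le> b" "b \<in> TS"
      have "?P b < e" using T b by blast
      moreover have "?P b \<ge> 0" by (rule Pnonneg[OF b(2)])
      ultimately show "dist (?P b) 0 < e" by (simp add: dist_real_def)
    qed
  qed
  have "((\<lambda>b. mux / k * (A - ?P b)) \<longlongrightarrow> mux / k * (A - 0)) ?F"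
    by (intro tendsto_intros P0)
  then have "((\<lambda>b. mux / k * (A - ?P b)) \<longlongrightarrow> A * mux / k) ?F" by (rule tendsto_cong_limit) simp
  then show "((\<lambda>b. delta_integral TS (u (real n * mux)) 0 b) \<longlongrightarrow> A * mux / k) ?F"
    using tendsto_cong[OF ev] by simp
qed

end

theorem mainTheorem10:
  fixes TS :: "real set" and A k mux :: real and u :: "real \<Rightarrow> real \<Rightarrow> real"
  assumes "time_scale0 TS"
    and "A > 0" and "k > 0" and "mux > 0"
    and TS1: "\<forall>t\<in>TS. 1 - k * graininess TS t / mux > 0"
    and "solves_P TS A k mux u"
  shows "\<forall>n::nat. delta_improper_integral_eq TS (u (real n * mux)) (A * mux / k)
                 \<and> delta_improper_integral_eq TS (u 0) (A * mux / k)"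
proof
  fix n :: nat
  have "delta_improper_integral_eq TS (u (real n * mux)) (A * mux / k)"
    by (rule final[OF assms])
  moreover have "delta_improper_integral_eq TS (u (real 0 * mux)) (A * mux / k)"
    by (rule final[OF assms])
  ultimately show "delta_improper_integral_eq TS (u (real n * mux)) (A * mux / k)
                 \<and> delta_improper_integral_eq TS (u 0) (A * mux / k)" by simp
qed

end
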